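(* Let $E$ be a Hausdorff locally convex topological vector space and let $C$ be a set of real-valued functions on $E$, each Gateaux differentiable at $\hat{x}$, with $\hat{x}\in[C]^\times$, such that $\overline{\operatorname{conv}}^{w^*}\{d_G\phi(\hat{x}):\phi\in C\}$ is $w^*$-compact in $E^*$. Then $\mathcal{T}_C(\hat{x})\neq\emptyset$ if and only if $\inf_{\xi\in C}\xi(\hat{x})=0$. In particular, $\mathcal{T}_C(\hat{x})\neq\emptyset$ whenever $\hat{x}\in F\setminus\operatorname{int}(F)$, where $F$ is a nonempty subset of $E$ that is weak-admissible at $\hat{x}$ and determined by $C$.
   Context: $E^*$ carries the weak-star topology; $\overline{\operatorname{conv}}^{w^*}$ is the $w^*$-closed convex hull. Gateaux differentiability of $\phi$ at $x$: there is $d_G\phi(x)\in E^*$ with $\lim_{t\searrow0}(\phi(x+tv)-\phi(x))/t=\langle d_G\phi(x),v\rangle$ for all $v$. $[C]^\times:=\{x\in E:\phi(x)\ge0\ \forall\phi\in C\}$. $\mathcal{T}_C(\hat x):=\bigcap_{n\ge1}\overline{\operatorname{conv}}^{w^*}\{d_G\phi(\hat x):\phi\in C,\ \phi(\hat x)\in[0,1/n]\}$. $C$ is equi-Gateaux differentiable at $x$ if for every $v$, $\lim_{t\searrow0}\sup_{\phi\in C}|(\phi(x+tv)-\phi(x)-t\langle d_G\phi(x),v\rangle)/t|=0$; equi-lower semicontinuous at $x$ if for every $\varepsilon>0$ some open neighbourhood $O$ of $x$ satisfies $\phi(y)-\phi(x)>-\varepsilon$ for all $y\in O,\phi\in C$.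 $F$ is weak-admissible at $\hat x\in F$, determined by a nonempty family $C$, if: (a) $F=[C]^\times$; (b) $C$ is equi-Gateaux differentiable at $\hat x$; (c) $\{\phi\in C:\phi(\hat x)\ne0\}$ is empty or equi-lower semicontinuous at $\hat x$; (d) $\overline{\operatorname{conv}}^{w^*}\{d_G\phi(\hat x):\phi\in C\}$ is $w^*$-compact. *)

theory Defs
  imports "HOL-Analysis.Analysis"
begin

text \<open>Hausdorff locally convex topological vector space structure on a type:
  the Hausdorff property is the type class t2_space; here we require continuity of
  the vector operations and a base of convex open neighbourhoods of 0.\<close>
definition lctvs :: "'a::{real_vector,topological_space} itself \<Rightarrow> bool" where
  "lctvs _ \<longleftrightarrow>
     continuous_on UNIV (\<lambda>p::'a \<times> 'a. fst p + snd p) \<and>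
     continuous_on UNIV (\<lambda>p::real \<times> 'a. fst p *\<^sub>R snd p) \<and>
     (\<forall>U::'a set. open U \<and> 0 \<in> U \<longrightarrow> (\<exists>V. open V \<and> convex V \<and> 0 \<in> V \<and> V \<subseteq> U))"

definition dual_space :: "('a::{real_vector,topological_space} \<Rightarrow> real) set" where
  "dual_space = {f. linear f \<and> continuous_on UNIV f}"

definition fconv_hull :: "('a \<Rightarrow> real) set \<Rightarrow> ('a \<Rightarrow> real) set" where
  "fconv_hull S = {f. \<exists>(n::nat) (a::nat \<Rightarrow> real) g.
      (\<forall>i<n. 0 \<le> a i \<and> g i \<in> S) \<and> (\<Sum>i<n. a i) = 1 \<and> f = (\<lambda>x. \<Sum>i<n. a i * g i x)}"

text \<open>Weak-star closed convex hull in E*: the weak-star topology on E* is the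
  subspace topology of the product (pointwise) topology on 'a \<Rightarrow> real, so the
  closure within E* is the pointwise closure intersected with E*.\<close>
definition wstar_closed_conv_hull :: "('a::{real_vector,topological_space} \<Rightarrow> real) set \<Rightarrow> ('a \<Rightarrow> real) set" where
  "wstar_closed_conv_hull S = dual_space \<inter> closure (fconv_hull S)"

definition has_gateaux_derivative ::
  "('a::{real_vector,topological_space} \<Rightarrow> real) \<Rightarrow> ('a \<Rightarrow> real) \<Rightarrow> 'a \<Rightarrow> bool" where
  "has_gateaux_derivative \<phi> d x \<longleftrightarrow> d \<in> dual_space \<and>
     (\<forall>v. ((\<lambda>t. (\<phi> (x + t *\<^sub>R v) - \<phi> x) / t) \<longlongrightarrow> d v) (at_right 0))"

definition gateaux_differentiable :: "('a::{real_vector,topological_space} \<Rightarrow> real) \<Rightarrow> 'a \<Rightarrow> bool" where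
  "gateaux_differentiable \<phi> x \<longleftrightarrow> (\<exists>d. has_gateaux_derivative \<phi> d x)"

definition dG :: "('a::{real_vector,topological_space} \<Rightarrow> real) \<Rightarrow> 'a \<Rightarrow> ('a \<Rightarrow> real)" where
  "dG \<phi> x = (SOME d. has_gateaux_derivative \<phi> d x)"

definition feasible_set :: "('a \<Rightarrow> real) set \<Rightarrow> 'a set" where
  "feasible_set C = {x. \<forall>\<phi>\<in>C. \<phi> x \<ge> 0}"

definition T_cone :: "('a::{real_vector,topological_space} \<Rightarrow> real) set \<Rightarrow> 'a \<Rightarrow> ('a \<Rightarrow> real) set" where
  "T_cone C x = (\<Inter>n\<in>{1::nat..}.
     wstar_closed_conv_hull {dG \<phi> x | \<phi>. \<phi> \<in> C \<and> \<phi> x \<in> {0..1 / real n}})"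

definition equi_gateaux :: "('a::{real_vector,topological_space} \<Rightarrow> real) set \<Rightarrow> 'a \<Rightarrow> bool" where
  "equi_gateaux C x \<longleftrightarrow> (\<forall>v.
     ((\<lambda>t. SUP \<phi>\<in>C. ereal \<bar>(\<phi> (x + t *\<^sub>R v) - \<phi> x - t * dG \<phi> x v) / t\<bar>) \<longlongrightarrow> 0) (at_right 0))"

definition equi_lsc :: "('a::topological_space \<Rightarrow> real) set \<Rightarrow> 'a \<Rightarrow> bool" where
  "equi_lsc C x \<longleftrightarrow> (\<forall>\<epsilon>>0. \<exists>N. open N \<and> x \<in> N \<and> (\<forall>y\<in>N. \<forall>\<phi>\<in>C. \<phi> y - \<phi> x > - \<epsilon>))"

definition weak_admissible ::
  "'a::{real_vector,topological_space} set \<Rightarrow> 'a \<Rightarrow> ('a \<Rightarrow> real) set \<Rightarrow> bool" where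
  "weak_admissible F x C \<longleftrightarrow> x \<in> F \<and> C \<noteq> {} \<and>
     F = feasible_set C \<and>
     equi_gateaux C x \<and>
     ({\<phi>\<in>C. \<phi> x \<noteq> 0} = {} \<or> equi_lsc {\<phi>\<in>C. \<phi> x \<noteq> 0} x) \<and>
     compact (wstar_closed_conv_hull {dG \<phi> x | \<phi>. \<phi> \<in> C})"

end

theory Submission
  imports Defs
begin

lemma fconv_mono: "A \<subseteq> B \<Longrightarrow> fconv_hull A \<subseteq> fconv_hull B"
  unfolding fconv_hull_def by blast

lemma fconv_sup: "f \<in> A \<Longrightarrow> f \<in> fconv_hull A"
  unfolding fconv_hull_def
  by (rule CollectI, rule exI[of _ 1], rule exI[of _ "\<lambda>_. 1"], rule exI[of _ "\<lambda>_. f"]) auto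

lemma fconv_empty: "fconv_hull {} = {}"
  unfolding fconv_hull_def by auto (metis lessThan_iff not_gr_zero sum.empty lessThan_0 zero_neq_one)

lemma wa_parts: assumes "weak_admissible F x C"
  shows "C \<noteq> {}" "F = feasible_set C" "{\<phi>\<in>C. \<phi> x \<noteq> 0} = {} \<or> equi_lsc {\<phi>\<in>C. \<phi> x \<noteq> 0} x"
  using assms unfolding weak_admissible_def by blast+

lemma ereal_fin_aux: fixes x :: ereal assumes "0 \<le> x" "x \<le> ereal r" shows "ereal (real_of_ereal x) = x"
  using assms by (cases x) auto

theorem proposition3p10:
  fixes C :: "('a::{real_vector,t2_space} \<Rightarrow> real) set" and xh :: 'a
  assumes "lctvs TYPE('a)"
    and "\<forall>\<phi>\<in>C. gateaux_differentiable \<phi> xh"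
    and "xh \<in> feasible_set C"
    and "compact (wstar_closed_conv_hull {dG \<phi> xh | \<phi>. \<phi> \<in> C})"
  shows "(T_cone C xh \<noteq> {} \<longleftrightarrow> (INF \<xi>\<in>C. ereal (\<xi> xh)) = 0) \<and>
         (\<forall>F. F \<noteq> {} \<and> weak_admissible F xh C \<and> xh \<in> F - interior F \<longrightarrow> T_cone C xh \<noteq> {})"
proof -
  define S where "S = (\<lambda>n::nat. {dG \<phi> xh | \<phi>. \<phi> \<in> C \<and> \<phi> xh \<in> {0..1 / real n}})"
  define S0 where "S0 = {dG \<phi> xh | \<phi>. \<phi> \<in> C}"
  define K where "K = wstar_closed_conv_hull S0"
  have Kc: "compact K" using assms(4) unfolding K_def S0_def .
  have feas: "\<And>\<phi>. \<phi> \<in> C \<Longrightarrow> \<phi> xh \<ge> 0" using assms(3) unfolding feasible_set_def by auto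
  have dual: "\<And>\<phi>. \<phi> \<in> C \<Longrightarrow> dG \<phi> xh \<in> dual_space"
  proof -
    fix \<phi> assume "\<phi> \<in> C"
    then obtain d where "has_gateaux_derivative \<phi> d xh" using assms(2) gateaux_differentiable_def by blast
    then have "has_gateaux_derivative \<phi> (dG \<phi> xh) xh" unfolding dG_def by (rule someI[where P="\<lambda>d. has_gateaux_derivative \<phi> d xh"])
    then show "dG \<phi> xh \<in> dual_space" unfolding has_gateaux_derivative_def by blast
  qed
  have Tdef: "T_cone C xh = (\<Inter>n\<in>{1::nat..}. wstar_closed_conv_hull (S n))"
    unfolding T_cone_def S_def by simp
  have ge0: "(INF \<xi>\<in>C. ereal (\<xi> xh)) \<ge> 0"
    by (rule INF_greatest) (simp add: feas)
  have A: "T_cone C xh \<noteq> {} \<longleftrightarrow> (INF \<xi>\<in>C. ereal (\<xi> xh)) = 0"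
  proof
    assume "T_cone C xh \<noteq> {}"
    then obtain f where f: "\<And>n. n \<ge> 1 \<Longrightarrow> f \<in> wstar_closed_conv_hull (S n)"
      unfolding Tdef by auto
    have le: "(INF \<xi>\<in>C. ereal (\<xi> xh)) \<le> ereal (1 / real n)" if "n \<ge> 1" for n
    proof -
      have "S n \<noteq> {}"
      proof
        assume "S n = {}"
        then show False using f[OF that] unfolding wstar_closed_conv_hull_def
          by (simp add: fconv_empty)
      qed
      then obtain \<phi> where "\<phi> \<in> C" "\<phi> xh \<le> 1 / real n" unfolding S_def by auto
      then show ?thesis by (meson INF_lower2 ereal_less_eq(3))
    qed
    have "(INF \<xi>\<in>C. ereal (\<xi> xh)) \<le> 0"
    proof (rule ereal_le_epsilon2)
      fix e :: real assume "e > 0"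
      then obtain n :: nat where n: "n > 0" "1 / real n < e"
        by (meson nat_approx_posE zero_less_Suc of_nat_Suc)
      then have "(INF \<xi>\<in>C. ereal (\<xi> xh)) \<le> ereal (1 / real n)" using le by simp
      also have "\<dots> \<le> 0 + ereal e" using n by simp
      finally show "(INF \<xi>\<in>C. ereal (\<xi> xh)) \<le> 0 + ereal e" .
    qed
    then show "(INF \<xi>\<in>C. ereal (\<xi> xh)) = 0" using ge0 by (rule antisym)
  next
    assume inf0: "(INF \<xi>\<in>C. ereal (\<xi> xh)) = 0"
    have ex: "\<exists>\<phi>\<in>C. \<phi> xh \<le> 1 / real n" if "n \<ge> 1" for n :: nat
    proof (rule ccontr)
      assume "\<not> ?thesis"
      then have "\<And>\<phi>. \<phi> \<in> C \<Longrightarrow> ereal (1 / real n) \<le> ereal (\<phi> xh)" by auto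
      then have "ereal (1 / real n) \<le> (INF \<xi>\<in>C. ereal (\<xi> xh))" by (rule INF_greatest)
      then show False using inf0 that by simp
    qed
    have sub: "S n \<subseteq> S0" for n unfolding S_def S0_def by auto
    have Kn: "wstar_closed_conv_hull (S n) = K \<inter> closure (fconv_hull (S n))" for n
      using closure_mono[OF fconv_mono[OF sub[of n]]]
      unfolding K_def wstar_closed_conv_hull_def by blast
    have ne: "wstar_closed_conv_hull (S n) \<noteq> {}" if n1: "n \<ge> 1" for n
    proof -
      obtain \<phi> where "\<phi> \<in> C" "\<phi> xh \<le> 1 / real n" using ex[OF n1] by blast
      then have "dG \<phi> xh \<in> S n" unfolding S_def using feas by auto
      then have "dG \<phi> xh \<in> closure (fconv_hull (S n))"
        using fconv_sup closure_subset by blast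
      then show ?thesis using dual[OF \<open>\<phi> \<in> C\<close>] unfolding wstar_closed_conv_hull_def by blast
    qed
    have Smono: "S m \<subseteq> S j" if "1 \<le> j" "j \<le> m" for m j
    proof -
      have "1 / real m \<le> 1 / real j" using that by (simp add: frac_le)
      then show ?thesis unfolding S_def by force
    qed
    have "K \<inter> (\<Inter>n\<in>{1::nat..}. closure (fconv_hull (S n))) \<noteq> {}"
    proof (rule compact_imp_fip_image[OF Kc])
      fix J :: "nat set" assume J: "finite J" "J \<subseteq> {1..}"
      define m where "m = Max (insert 1 J)"
      have m1: "m \<ge> 1" unfolding m_def using J by simp
      have jm: "j \<le> m" if "j \<in> J" for j unfolding m_def using J that by simp
      have "wstar_closed_conv_hull (S m) \<subseteq> K \<inter> (\<Inter>i\<in>J. closure (fconv_hull (S i)))"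
      proof -
        have "closure (fconv_hull (S m)) \<subseteq> closure (fconv_hull (S i))" if "i \<in> J" for i
          using that J jm Smono by (meson atLeast_iff closure_mono fconv_mono subsetD)
        then show ?thesis using Kn[of m] by blast
      qed
      then show "K \<inter> (\<Inter>i\<in>J. closure (fconv_hull (S i))) \<noteq> {}" using ne[OF m1] by blast
    qed simp
    moreover have "K \<inter> (\<Inter>n\<in>{1::nat..}. closure (fconv_hull (S n))) \<subseteq> T_cone C xh"
      unfolding Tdef using Kn by auto
    ultimately show "T_cone C xh \<noteq> {}" by blast
  qed
  have B: "T_cone C xh \<noteq> {}" if F: "F \<noteq> {}" "weak_admissible F xh C" "xh \<in> F - interior F" for F
  proof (rule ccontr)
    assume "\<not> T_cone C xh \<noteq> {}"
    then have nz: "(INF \<xi>\<in>C. ereal (\<xi> xh)) \<noteq> 0" using A by blast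
    have Cne: "C \<noteq> {}" and Feq: "F = feasible_set C"
      and lsc: "{\<phi>\<in>C. \<phi> xh \<noteq> 0} = {} \<or> equi_lsc {\<phi>\<in>C. \<phi> xh \<noteq> 0} xh"
      using wa_parts[OF F(2)] by blast+
    obtain \<psi> where "\<psi> \<in> C" using Cne by blast
    have fin: "(INF \<xi>\<in>C. ereal (\<xi> xh)) \<le> ereal (\<psi> xh)" using \<open>\<psi> \<in> C\<close> by (rule INF_lower)
    define d where "d = real_of_ereal (INF \<xi>\<in>C. ereal (\<xi> xh))"
    have dI: "ereal d = (INF \<xi>\<in>C. ereal (\<xi> xh))"
      unfolding d_def by (rule ereal_fin_aux[OF ge0 fin])
    have dpos: "d > 0"
    proof -
      have "0 \<le> ereal d" "ereal d \<noteq> 0" using dI nz ge0 by auto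
      then show ?thesis by simp
    qed
    have dle: "d \<le> \<phi> xh" if "\<phi> \<in> C" for \<phi>
    proof -
      have "ereal d \<le> ereal (\<phi> xh)" unfolding dI using that by (rule INF_lower)
      then show ?thesis by simp
    qed
    have nz2: "\<phi> xh \<noteq> 0" if "\<phi> \<in> C" for \<phi> using dle[OF that] dpos by linarith
    have eqC: "{\<phi>\<in>C. \<phi> xh \<noteq> 0} = C" using nz2 by blast
    then have "equi_lsc C xh" using lsc Cne by simp
    then have "\<forall>\<epsilon>>0. \<exists>N. open N \<and> xh \<in> N \<and> (\<forall>y\<in>N. \<forall>\<phi>\<in>C. \<phi> y - \<phi> xh > - \<epsilon>)"
      unfolding equi_lsc_def .
    from this[rule_format, OF dpos] obtain N where N1: "open N" "xh \<in> N"
      and N3: "\<forall>y\<in>N. \<forall>\<phi>\<in>C. \<phi> y - \<phi> xh > - d" by (elim exE conjE)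
    have "N \<subseteq> F" unfolding Feq feasible_set_def
    proof (intro subsetI CollectI ballI)
      fix y \<phi> assume "y \<in> N" "\<phi> \<in> C"
      then show "\<phi> y \<ge> 0" using N3 dle[of \<phi>] by fastforce
    qed
    then have "xh \<in> interior F" using N1 by (meson interiorI)
    then show False using F(3) by blast
  qed
  show ?thesis using A B by blast
qed

end
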